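(* Let $C_1$ and $C_2$ be maximal configurations of finite labeled prime event structures $\mathcal{E}_1$ and $\mathcal{E}_2$ with labelings $h_1,h_2$, and suppose that for every $e_1\in C_1$ and $e_2\in C_2$ we have $|\{e\in C_1\mid h_1(e_1)=h_1(e)\}|=1$ and $|\{e\in C_2\mid h_2(e_2)=h_2(e)\}|=1$. If $\mathcal{L}(C_1)\subseteq\mathcal{L}(C_2)$, then $C_1\sqsubset_S C_2$.
   Context: A finite $\mathcal{X}$-labeled prime event structure is $\langle E,<,\#,h\rangle$ with finite $E$, strict partial order $<$, labeling $h:E\to\mathcal{X}$, and symmetric irreflexive conflict relation $\#$ closed under $<$; $\mathcal{X}$ contains $\varepsilon$ denoting the empty word; there is an event $\bot$ below all other events with $h(\bot)=\varepsilon$. A configuration is a left-closed, conflict-free subset of $E$; maximal if no configuration strictly contains it. A trace of a configuration $C$ lists every event of $C$ exactly once such that $e_i<e_j$ implies $i<j$; $\mathcal{L}(C)=\{h(t)\mid t$ a trace of $C\}$ (labels pointwise, $\varepsilon$ omitted). With causal orders $<_1,<_2$, a sufficient embedding $\varphi:C_1\to C_2$ is a bijection with $h_1(e)=h_2(\varphi(e))$ for all $e\in C_1$ and such that $\varphi(e_1)<_2\varphi(e_2)$ implies $e_1<_1e_2$; $C_1\sqsubset_S C_2$ means such an embedding exists. *)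

theory Defs
  imports Main
begin

text \<open>A finite X-labeled prime event structure, given by its event set E, causal
order lt (strict partial order), conflict relation confl, labeling h, the
distinguished empty-word label eps, and the bottom event b0.\<close>

definition prime_es ::
  "'e set \<Rightarrow> ('e \<Rightarrow> 'e \<Rightarrow> bool) \<Rightarrow> ('e \<Rightarrow> 'e \<Rightarrow> bool) \<Rightarrow> ('e \<Rightarrow> 'x) \<Rightarrow> 'x \<Rightarrow> 'e \<Rightarrow> bool"
where
  "prime_es E lt confl h eps b0 \<longleftrightarrow>
     finite E \<and>
     (\<forall>x y. lt x y \<longrightarrow> x \<in> E \<and> y \<in> E) \<and>
     (\<forall>x. \<not> lt x x) \<and>
     (\<forall>x y z. lt x y \<longrightarrow> lt y z \<longrightarrow> lt x z) \<and>
     (\<forall>x y. confl x y \<longrightarrow> x \<in> E \<and> y \<in> E) \<and>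
     (\<forall>x y. confl x y \<longrightarrow> confl y x) \<and>
     (\<forall>x. \<not> confl x x) \<and>
     (\<forall>x y z. confl x y \<longrightarrow> lt y z \<longrightarrow> confl x z) \<and>
     b0 \<in> E \<and> h b0 = eps \<and>
     (\<forall>e\<in>E. e \<noteq> b0 \<longrightarrow> lt b0 e)"

definition configuration ::
  "'e set \<Rightarrow> ('e \<Rightarrow> 'e \<Rightarrow> bool) \<Rightarrow> ('e \<Rightarrow> 'e \<Rightarrow> bool) \<Rightarrow> 'e set \<Rightarrow> bool"
where
  "configuration E lt confl C \<longleftrightarrow>
     C \<subseteq> E \<and>
     (\<forall>e\<in>C. \<forall>e'\<in>E. lt e' e \<longrightarrow> e' \<in> C) \<and>
     (\<forall>e\<in>C. \<forall>e'\<in>C. \<not> confl e e')"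

definition maximal_configuration ::
  "'e set \<Rightarrow> ('e \<Rightarrow> 'e \<Rightarrow> bool) \<Rightarrow> ('e \<Rightarrow> 'e \<Rightarrow> bool) \<Rightarrow> 'e set \<Rightarrow> bool"
where
  "maximal_configuration E lt confl C \<longleftrightarrow>
     configuration E lt confl C \<and>
     \<not> (\<exists>C'. configuration E lt confl C' \<and> C \<subset> C')"

definition is_trace :: "('e \<Rightarrow> 'e \<Rightarrow> bool) \<Rightarrow> 'e set \<Rightarrow> 'e list \<Rightarrow> bool"
where
  "is_trace lt C t \<longleftrightarrow>
     distinct t \<and> set t = C \<and>
     (\<forall>i<length t. \<forall>j<length t. lt (t ! i) (t ! j) \<longrightarrow> i < j)"

definition label_word :: "('e \<Rightarrow> 'x) \<Rightarrow> 'x \<Rightarrow> 'e list \<Rightarrow> 'x list"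
where
  "label_word h eps t = filter (\<lambda>a. a \<noteq> eps) (map h t)"

definition lang :: "('e \<Rightarrow> 'e \<Rightarrow> bool) \<Rightarrow> ('e \<Rightarrow> 'x) \<Rightarrow> 'x \<Rightarrow> 'e set \<Rightarrow> 'x list set"
where
  "lang lt h eps C = {label_word h eps t | t. is_trace lt C t}"

definition sufficient_embedding ::
  "('e1 \<Rightarrow> 'e1 \<Rightarrow> bool) \<Rightarrow> ('e1 \<Rightarrow> 'x) \<Rightarrow> 'e1 set \<Rightarrow>
   ('e2 \<Rightarrow> 'e2 \<Rightarrow> bool) \<Rightarrow> ('e2 \<Rightarrow> 'x) \<Rightarrow> 'e2 set \<Rightarrow> ('e1 \<Rightarrow> 'e2) \<Rightarrow> bool"
where
  "sufficient_embedding lt1 h1 C1 lt2 h2 C2 \<phi> \<longleftrightarrow>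
     bij_betw \<phi> C1 C2 \<and>
     (\<forall>e\<in>C1. h1 e = h2 (\<phi> e)) \<and>
     (\<forall>e1\<in>C1. \<forall>e2\<in>C1. lt2 (\<phi> e1) (\<phi> e2) \<longrightarrow> lt1 e1 e2)"

definition suff_embeds ::
  "('e1 \<Rightarrow> 'e1 \<Rightarrow> bool) \<Rightarrow> ('e1 \<Rightarrow> 'x) \<Rightarrow> 'e1 set \<Rightarrow>
   ('e2 \<Rightarrow> 'e2 \<Rightarrow> bool) \<Rightarrow> ('e2 \<Rightarrow> 'x) \<Rightarrow> 'e2 set \<Rightarrow> bool"
where
  "suff_embeds lt1 h1 C1 lt2 h2 C2 \<longleftrightarrow> (\<exists>\<phi>. sufficient_embedding lt1 h1 C1 lt2 h2 C2 \<phi>)"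

end

theory Submission imports Defs begin

lemma lin_ext:
  assumes "finite C" "\<forall>x\<in>C. \<not> R x x"
    "\<forall>x\<in>C. \<forall>y\<in>C. \<forall>z\<in>C. R x y \<longrightarrow> R y z \<longrightarrow> R x z"
  shows "\<exists>t. distinct t \<and> set t = C \<and> (\<forall>i<length t. \<forall>j<length t. R (t!i) (t!j) \<longrightarrow> i<j)"
proof -
  define rk where "rk x = card {z\<in>C. R z x}" for x
  have rk: "rk x < rk y" if "x \<in> C" "y \<in> C" "R x y" for x y
  proof -
    have "{z\<in>C. R z x} \<subset> {z\<in>C. R z y}" using that assms(2,3) by blast
    then show ?thesis unfolding rk_def by (simp add: assms(1) psubset_card_mono)
  qed
  obtain xs where xs: "distinct xs" "set xs = C" using assms(1) finite_distinct_list by blast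
  define t where "t = sort_key rk xs"
  have d: "distinct t" "set t = C" using xs unfolding t_def by auto
  have s: "sorted (map rk t)" unfolding t_def by simp
  have "i < j" if "i<length t" "j<length t" "R (t!i) (t!j)" for i j
  proof (rule ccontr)
    assume "\<not> i < j"
    then have "rk (t!j) \<le> rk (t!i)" using s that sorted_nth_mono[of "map rk t" j i] by simp
    moreover have "rk (t!i) < rk (t!j)" using rk that d nth_mem by metis
    ultimately show False by simp
  qed
  then show ?thesis using d by blast
qed

definition before :: "'a list \<Rightarrow> 'a \<Rightarrow> 'a \<Rightarrow> bool" where
  "before xs x y \<longleftrightarrow> (\<exists>us vs. xs = us @ vs \<and> x \<in> set us \<and> y \<in> set vs)"

lemma before_idx: "i < j \<Longrightarrow> j < length xs \<Longrightarrow> before xs (xs!i) (xs!j)"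
  unfolding before_def
  apply (rule exI[of _ "take j xs"], rule exI[of _ "drop j xs"])
  apply (simp add: in_set_conv_nth)
  apply (rule conjI)
   apply (rule exI[of _ i], simp)
  apply (rule exI[of _ 0], simp)
  done

lemma before_map: "before xs x y \<Longrightarrow> before (map f xs) (f x) (f y)"
  unfolding before_def
proof (elim exE conjE)
  fix us vs assume "xs = us @ vs" "x \<in> set us" "y \<in> set vs"
  then show "\<exists>us vs. map f xs = us @ vs \<and> f x \<in> set us \<and> f y \<in> set vs"
    by (intro exI[of _ "map f us"] exI[of _ "map f vs"]) auto
qed

lemma before_filter: "before xs x y \<Longrightarrow> P x \<Longrightarrow> P y \<Longrightarrow> before (filter P xs) x y"
  unfolding before_def
proof (elim exE conjE)
  fix us vs assume "xs = us @ vs" "x \<in> set us" "y \<in> set vs" "P x" "P y"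
  then show "\<exists>us vs. filter P xs = us @ vs \<and> x \<in> set us \<and> y \<in> set vs"
    by (intro exI[of _ "filter P us"] exI[of _ "filter P vs"]) auto
qed

lemma before_distinct: "distinct xs \<Longrightarrow> before xs x y \<Longrightarrow> before xs y x \<Longrightarrow> False"
  unfolding before_def
proof (elim exE conjE)
  fix us vs us' vs' assume d: "distinct xs" and a: "xs = us @ vs" "x \<in> set us" "y \<in> set vs"
    and b: "xs = us' @ vs'" "y \<in> set us'" "x \<in> set vs'"
  have "us @ vs = us' @ vs'" using a b by simp
  then obtain zs where "(us = us' @ zs \<and> zs @ vs = vs') \<or> (us @ zs = us' \<and> vs = zs @ vs')"
    by (auto simp: append_eq_append_conv2)
  then show False
  proof
    assume "us = us' @ zs \<and> zs @ vs = vs'"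
    then show False using d a b by auto
  next
    assume "us @ zs = us' \<and> vs = zs @ vs'"
    then show False using d a b by auto
  qed
qed


lemma pes_facts:
  assumes "prime_es E lt confl h eps b0"
  shows "finite E" "\<And>x y. lt x y \<Longrightarrow> x \<in> E \<and> y \<in> E" "\<And>x. \<not> lt x x"
    "\<And>x y z. lt x y \<Longrightarrow> lt y z \<Longrightarrow> lt x z"
    "\<And>x y. confl x y \<Longrightarrow> confl y x" "\<And>x. \<not> confl x x"
    "\<And>x y z. confl x y \<Longrightarrow> lt y z \<Longrightarrow> confl x z"
    "b0 \<in> E" "h b0 = eps" "\<And>e. e \<in> E \<Longrightarrow> e \<noteq> b0 \<Longrightarrow> lt b0 e"
    "\<And>x. \<not> lt x b0"
proof -
  have c: "finite E \<and>
     (\<forall>x y. lt x y \<longrightarrow> x \<in> E \<and> y \<in> E) \<and>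
     (\<forall>x. \<not> lt x x) \<and>
     (\<forall>x y z. lt x y \<longrightarrow> lt y z \<longrightarrow> lt x z) \<and>
     (\<forall>x y. confl x y \<longrightarrow> x \<in> E \<and> y \<in> E) \<and>
     (\<forall>x y. confl x y \<longrightarrow> confl y x) \<and>
     (\<forall>x. \<not> confl x x) \<and>
     (\<forall>x y z. confl x y \<longrightarrow> lt y z \<longrightarrow> confl x z) \<and>
     b0 \<in> E \<and> h b0 = eps \<and>
     (\<forall>e\<in>E. e \<noteq> b0 \<longrightarrow> lt b0 e)" using assms unfolding prime_es_def .
  from c have c1: "finite E" by (elim conjE) assumption
  from c have c2: "\<forall>x y. lt x y \<longrightarrow> x \<in> E \<and> y \<in> E" by (elim conjE) assumption
  from c have c3: "\<forall>x. \<not> lt x x" by (elim conjE) assumption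
  from c have c4: "\<forall>x y z. lt x y \<longrightarrow> lt y z \<longrightarrow> lt x z" by (elim conjE) assumption
  from c have c6: "\<forall>x y. confl x y \<longrightarrow> confl y x" by (elim conjE) assumption
  from c have c7: "\<forall>x. \<not> confl x x" by (elim conjE) assumption
  from c have c8: "\<forall>x y z. confl x y \<longrightarrow> lt y z \<longrightarrow> confl x z" by (elim conjE) assumption
  from c have c9: "b0 \<in> E" by (elim conjE) assumption
  from c have c10: "h b0 = eps" by (elim conjE) assumption
  from c have c11: "\<forall>e\<in>E. e \<noteq> b0 \<longrightarrow> lt b0 e" by (elim conjE) assumption
  show "finite E" by (fact c1)
  show "\<And>x y. lt x y \<Longrightarrow> x \<in> E \<and> y \<in> E" using c2 by (elim allE impE)
  show "\<And>x. \<not> lt x x" using c3 by (elim allE)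
  show "\<And>x y z. lt x y \<Longrightarrow> lt y z \<Longrightarrow> lt x z" using c4 by (elim allE impE)
  show "\<And>x y. confl x y \<Longrightarrow> confl y x" using c6 by (elim allE impE)
  show "\<And>x. \<not> confl x x" using c7 by (elim allE)
  show "\<And>x y z. confl x y \<Longrightarrow> lt y z \<Longrightarrow> confl x z" using c8 by (elim allE impE)
  show "b0 \<in> E" by (fact c9)
  show "h b0 = eps" by (fact c10)
  show "\<And>e. e \<in> E \<Longrightarrow> e \<noteq> b0 \<Longrightarrow> lt b0 e" using c11 by (elim ballE impE) auto
  show "\<And>x. \<not> lt x b0"
  proof
    fix x assume l: "lt x b0"
    then have "x \<in> E" using c2 by blast
    show False
    proof (cases "x = b0")
      case True then show False using l c3 by blast
    next
      case False then have "lt b0 x" using c11 \<open>x \<in> E\<close> by blast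
      then have "lt b0 b0" using l c4 by blast
      then show False using c3 by blast
    qed
  qed
qed

lemma bot_in:
  assumes P: "prime_es E lt confl h eps b0" and M: "maximal_configuration E lt confl C"
  shows "b0 \<in> C"
proof (rule ccontr)
  assume nb: "b0 \<notin> C"
  have c: "configuration E lt confl C" using M unfolding maximal_configuration_def by blast
  note f = pes_facts[OF P]
  have cf: "\<not> confl b0 e" if "e \<in> C" for e
  proof
    assume "confl b0 e"
    moreover have "e \<in> E" "e \<noteq> b0" using c that nb unfolding configuration_def by auto
    ultimately show False using f by metis
  qed
  have "configuration E lt confl (insert b0 C)"
    unfolding configuration_def
  proof (intro conjI ballI impI)
    show "insert b0 C \<subseteq> E" using c f(8) unfolding configuration_def by blast
  next
    fix e e' assume "e \<in> insert b0 C" "e' \<in> E" "lt e' e"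
    then show "e' \<in> insert b0 C" using c f(11) unfolding configuration_def by blast
  next
    fix e e' assume "e \<in> insert b0 C" "e' \<in> insert b0 C"
    then show "\<not> confl e e'" using c cf f(5,6) unfolding configuration_def by blast
  qed
  moreover have "C \<subset> insert b0 C" using nb by auto
  ultimately show False using M unfolding maximal_configuration_def by blast
qed

lemma inj_from_card:
  assumes "\<forall>e1\<in>C. card {e\<in>C. h e1 = h e} = 1"
  shows "inj_on h C"
proof (rule inj_onI)
  fix x y assume xy: "x \<in> C" "y \<in> C" "h x = h y"
  then have "card {e\<in>C. h x = h e} = 1" using assms by blast
  then obtain z where z: "{e\<in>C. h x = h e} = {z}" by (rule card_1_singletonE)
  have "x \<in> {e\<in>C. h x = h e}" "y \<in> {e\<in>C. h x = h e}" using xy by simp_all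
  then show "x = y" unfolding z by simp
qed

lemma trace_exists:
  assumes P: "prime_es E lt confl h eps b0" and C: "C \<subseteq> E"
  shows "\<exists>t. is_trace lt C t"
proof -
  note f = pes_facts[OF P]
  have "finite C" using C f(1) finite_subset by blast
  then show ?thesis using lin_ext[of C lt] f unfolding is_trace_def by metis
qed

theorem lemma10:
  fixes E1 :: "'e1 set" and lt1 confl1 :: "'e1 \<Rightarrow> 'e1 \<Rightarrow> bool" and h1 :: "'e1 \<Rightarrow> 'x"
    and bot1 :: 'e1
    and E2 :: "'e2 set" and lt2 confl2 :: "'e2 \<Rightarrow> 'e2 \<Rightarrow> bool" and h2 :: "'e2 \<Rightarrow> 'x"
    and bot2 :: 'e2 and eps :: 'x and C1 :: "'e1 set" and C2 :: "'e2 set"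
  assumes "prime_es E1 lt1 confl1 h1 eps bot1"
    and "prime_es E2 lt2 confl2 h2 eps bot2"
    and "maximal_configuration E1 lt1 confl1 C1"
    and "maximal_configuration E2 lt2 confl2 C2"
    and "\<forall>e1\<in>C1. card {e\<in>C1. h1 e1 = h1 e} = 1"
    and "\<forall>e2\<in>C2. card {e\<in>C2. h2 e2 = h2 e} = 1"
    and "lang lt1 h1 eps C1 \<subseteq> lang lt2 h2 eps C2"
  shows "suff_embeds lt1 h1 C1 lt2 h2 C2"
proof -
  note f1 = pes_facts[OF assms(1)] and f2 = pes_facts[OF assms(2)]
  have b1: "bot1 \<in> C1" using bot_in assms(1,3) by metis
  have b2: "bot2 \<in> C2" using bot_in assms(2,4) by metis
  have CE1: "C1 \<subseteq> E1" using assms(3) unfolding maximal_configuration_def configuration_def by blast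
  have CE2: "C2 \<subseteq> E2" using assms(4) unfolding maximal_configuration_def configuration_def by blast
  have fin1: "finite C1" using CE1 f1(1) finite_subset by blast
  have i1: "inj_on h1 C1" using inj_from_card assms(5) by blast
  have i2: "inj_on h2 C2" using inj_from_card assms(6) by blast
  have ne1: "h1 e \<noteq> eps" if "e \<in> C1" "e \<noteq> bot1" for e
    using i1 that b1 f1(9) inj_on_def by metis
  obtain t1 where t1: "is_trace lt1 C1 t1" using trace_exists[OF assms(1) CE1] by blast
  have "label_word h1 eps t1 \<in> lang lt2 h2 eps C2"
    using assms(7) t1 unfolding lang_def by blast
  then obtain t2 where t2: "is_trace lt2 C2 t2" "label_word h1 eps t1 = label_word h2 eps t2"
    unfolding lang_def by blast
  have "set (label_word h1 eps t1) = h1 ` C1 - {eps}"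
    using t1 unfolding label_word_def is_trace_def by auto
  moreover have "set (label_word h2 eps t2) = h2 ` C2 - {eps}"
    using t2 unfolding label_word_def is_trace_def by auto
  ultimately have img: "h1 ` C1 = h2 ` C2" using t2(2) b1 b2 f1(9) f2(9)
    by (metis image_eqI insert_Diff_single insert_absorb)
  define phi where "phi = inv_into C2 h2 \<circ> h1"
  have phiC: "phi e \<in> C2" if "e \<in> C1" for e
  proof -
    have "h1 e \<in> h2 ` C2" using that img by blast
    then show ?thesis unfolding phi_def by (simp add: inv_into_into)
  qed
  have phih: "h2 (phi e) = h1 e" if "e \<in> C1" for e
  proof -
    have "h1 e \<in> h2 ` C2" using that img by blast
    then show ?thesis unfolding phi_def by (simp add: f_inv_into_f)
  qed
  have bij: "bij_betw phi C1 C2"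
  proof -
    have "bij_betw h1 C1 (h2 ` C2)" using i1 img by (simp add: bij_betw_def)
    moreover have "bij_betw (inv_into C2 h2) (h2 ` C2) C2" using i2 by (simp add: bij_betw_inv_into inj_on_imp_bij_betw)
    ultimately show ?thesis unfolding phi_def using bij_betw_trans by blast
  qed
  have ord: "lt1 a b" if ab: "a \<in> C1" "b \<in> C1" "lt2 (phi a) (phi b)" for a b
  proof (rule ccontr)
    assume nab: "\<not> lt1 a b"
    have "b \<noteq> bot1"
    proof
      assume "b = bot1"
      then have "h2 (phi b) = h2 bot2" using phih ab f1(9) f2(9) by simp
      then have "phi b = bot2" using i2 phiC ab b2 inj_on_def by metis
      then show False using ab f2(11) by simp
    qed
    have "a \<noteq> bot1" using nab ab f1(10) CE1 \<open>b \<noteq> bot1\<close> by blast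
    have "a \<noteq> b" using ab f2(3) by metis
    define R where "R x y \<longleftrightarrow> lt1 x y \<or> ((x = b \<or> lt1 x b) \<and> (a = y \<or> lt1 a y))" for x y
    have tr: "lt1 x z" if "lt1 x y" "lt1 y z" for x y z using f1(4) that by blast
    have Rirr: "\<forall>x\<in>C1. \<not> R x x"
    proof (intro ballI notI)
      fix x assume "R x x"
      then show False unfolding R_def using f1(3) nab \<open>a \<noteq> b\<close> tr[of a x b] by blast
    qed
    have Rtr: "\<forall>x\<in>C1. \<forall>y\<in>C1. \<forall>z\<in>C1. R x y \<longrightarrow> R y z \<longrightarrow> R x z"
    proof (intro ballI impI)
      fix x y z assume xy: "R x y" and yz: "R y z"
      have nn: "\<not> ((y = b \<or> lt1 y b) \<and> (a = y \<or> lt1 a y))"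
        using nab \<open>a \<noteq> b\<close> tr[of a y b] by blast
      show "R x z"
      proof (cases "lt1 x y")
        case True
        then show ?thesis using yz nn tr[of x y z] tr[of x y b] unfolding R_def by blast
      next
        case False
        then have "(x = b \<or> lt1 x b) \<and> (a = y \<or> lt1 a y)" using xy unfolding R_def by blast
        then show ?thesis using yz nn tr[of a y z] unfolding R_def by blast
      qed
    qed
    obtain t where t: "distinct t" "set t = C1" "\<forall>i<length t. \<forall>j<length t. R (t!i) (t!j) \<longrightarrow> i<j"
      using lin_ext[OF fin1 Rirr Rtr] by blast
    have tt: "is_trace lt1 C1 t" unfolding is_trace_def
    proof (intro conjI allI impI)
      fix i j assume "i < length t" "j < length t" "lt1 (t!i) (t!j)"
      then show "i < j" using t(3) unfolding R_def by blast
    qed (use t in auto)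
    obtain i j where ij: "i < length t" "j < length t" "t!i = b" "t!j = a"
    proof -
      have "b \<in> set t" "a \<in> set t" using t(2) ab by auto
      then show ?thesis using that by (metis in_set_conv_nth)
    qed
    have "R b a" unfolding R_def by simp
    then have "i < j" using t(3) ij by auto
    then have "before t (t!i) (t!j)" using before_idx ij(2) by blast
    then have "before t b a" using ij by simp
    then have "before (map h1 t) (h1 b) (h1 a)" by (rule before_map)
    then have bw1: "before (label_word h1 eps t) (h1 b) (h1 a)"
      unfolding label_word_def
      using before_filter[of "map h1 t" "h1 b" "h1 a" "\<lambda>x. x \<noteq> eps"] ne1 ab \<open>a \<noteq> bot1\<close> \<open>b \<noteq> bot1\<close> by blast
    have "label_word h1 eps t \<in> lang lt2 h2 eps C2"
      using assms(7) tt unfolding lang_def by blast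
    then obtain u where u: "is_trace lt2 C2 u" "label_word h1 eps t = label_word h2 eps u"
      unfolding lang_def by blast
    obtain i' j' where ij': "i' < length u" "j' < length u" "u!i' = phi a" "u!j' = phi b"
    proof -
      have "set u = C2" using u(1) unfolding is_trace_def by blast
      then have "phi a \<in> set u" "phi b \<in> set u" using phiC ab by auto
      then show ?thesis using that by (metis in_set_conv_nth)
    qed
    have H: "\<forall>i<length u. \<forall>j<length u. lt2 (u!i) (u!j) \<longrightarrow> i<j"
      using u(1) unfolding is_trace_def by (elim conjE) assumption
    have "i' < j'" using H[rule_format, OF ij'(1) ij'(2)] ij'(3,4) ab(3) by simp
    then have "before u (u!i') (u!j')" using before_idx ij'(2) by blast
    then have "before u (phi a) (phi b)" using ij' by simp
    then have "before (map h2 u) (h2 (phi a)) (h2 (phi b))" by (rule before_map)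
    then have "before (map h2 u) (h1 a) (h1 b)" using phih ab by simp
    then have "before (filter (\<lambda>x. x \<noteq> eps) (map h2 u)) (h1 a) (h1 b)"
      by (rule before_filter) (use ne1 ab \<open>a \<noteq> bot1\<close> \<open>b \<noteq> bot1\<close> in auto)
    then have bw2: "before (label_word h1 eps t) (h1 a) (h1 b)"
      using u(2) unfolding label_word_def by simp
    have "distinct (label_word h1 eps t)"
      unfolding label_word_def using t(1,2) i1 by (simp add: distinct_map)
    then show False using before_distinct[OF _ bw1 bw2] by blast
  qed
  have "sufficient_embedding lt1 h1 C1 lt2 h2 C2 phi"
    unfolding sufficient_embedding_def using bij phih ord by simp
  then show ?thesis unfolding suff_embeds_def by blast
qed

end
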